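(* For all integers $2\le k\le n$, $$\frac12+\frac{1}{4n}\le q_t(G_k,G_n)\le \frac12+\frac{1}{2n}.$$ In particular, for every $k\ge 2$, $\lim_{n\to\infty} q_t(G_k,G_n)=\frac12$.
   Context: For $m\ge 1$, $G_m$ is the graph with vertex set $\{a_1,\ldots,a_m\}\cup\{b_1,\ldots,b_m\}\cup\{c_1,\ldots,c_m\}$ in which $\{a_1,\ldots,a_m\}$ forms a clique, each $b_i$ is adjacent to $a_i$ and to $c_i$, and there are no other edges. $\gamma_t$ denotes the total domination number (minimum size of a set $S$ of vertices such that every vertex of the graph has a neighbor in $S$). $G\Box H$ is the Cartesian product: vertex set $V(G)\times V(H)$, with $(u_1,v_1)\sim(u_2,v_2)$ iff either $u_1=u_2$ and $v_1v_2\in E(H)$, or $v_1=v_2$ and $u_1u_2\in E(G)$. For graphs $G,H$ without isolated vertices, the total domination quotient is $q_t(G,H)=\dfrac{\gamma_t(G\Box H)}{\gamma_t(G)\gamma_t(H)}$. *)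

theory Defs
  imports Complex_Main
begin

text \<open>A (simple) graph is given by a vertex set and a symmetric, irreflexive
adjacency relation.\<close>
type_synonym 'a graph = "'a set \<times> ('a \<Rightarrow> 'a \<Rightarrow> bool)"

definition verts :: "'a graph \<Rightarrow> 'a set" where "verts G = fst G"
definition adj :: "'a graph \<Rightarrow> 'a \<Rightarrow> 'a \<Rightarrow> bool" where "adj G = snd G"

definition total_dominating :: "'a graph \<Rightarrow> 'a set \<Rightarrow> bool" where
  "total_dominating G S \<longleftrightarrow> S \<subseteq> verts G \<and> (\<forall>v\<in>verts G. \<exists>u\<in>S. adj G v u)"

definition gamma_t :: "'a graph \<Rightarrow> nat" where
  "gamma_t G = (LEAST k. \<exists>S. total_dominating G S \<and> finite S \<and> card S = k)"

definition cart_prod :: "'a graph \<Rightarrow> 'b graph \<Rightarrow> ('a \<times> 'b) graph" where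
  "cart_prod G H = (verts G \<times> verts H,
     \<lambda>(u1, v1) (u2, v2). (u1 = u2 \<and> adj H v1 v2) \<or> (v1 = v2 \<and> adj G u1 u2))"

definition q_t :: "'a graph \<Rightarrow> 'b graph \<Rightarrow> real" where
  "q_t G H = real (gamma_t (cart_prod G H)) / (real (gamma_t G) * real (gamma_t H))"

text \<open>The graph G_m: vertex (0,i) is a_i, (1,i) is b_i, (2,i) is c_i, for 1 \<le> i \<le> m.
The a_i form a clique, b_i is adjacent to a_i and c_i, no other edges.\<close>
definition G :: "nat \<Rightarrow> (nat \<times> nat) graph" where
  "G m = ({0, 1, 2} \<times> {1..m},
     \<lambda>(x, i) (y, j). (x = 0 \<and> y = 0 \<and> i \<noteq> j)
                   \<or> (i = j \<and> ((x = 0 \<and> y = 1) \<or> (x = 1 \<and> y = 0)))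
                   \<or> (i = j \<and> ((x = 1 \<and> y = 2) \<or> (x = 2 \<and> y = 1))))"

end

theory Submission
  imports Defs
begin


lemma vertsG[simp]: "verts (G m) = {0,1,2} \<times> {1..m}"
  by (simp add: verts_def G_def)
lemma adjG[simp]: "adj (G m) (x,i) (y,j) = ((x = 0 \<and> y = 0 \<and> i \<noteq> j)
                   \<or> (i = j \<and> ((x = 0 \<and> y = 1) \<or> (x = 1 \<and> y = 0)))
                   \<or> (i = j \<and> ((x = 1 \<and> y = 2) \<or> (x = 2 \<and> y = 1))))"
  by (simp add: adj_def G_def)
lemma vertsP[simp]: "verts (cart_prod A B) = verts A \<times> verts B"
  by (simp add: verts_def cart_prod_def)
lemma adjP[simp]: "adj (cart_prod A B) (u1,v1) (u2,v2) = ((u1=u2 \<and> adj B v1 v2) \<or> (v1=v2 \<and> adj A u1 u2))"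
  by (simp add: adj_def cart_prod_def)

lemma gamma_le: "total_dominating H S \<Longrightarrow> finite S \<Longrightarrow> gamma_t H \<le> card S"
  unfolding gamma_t_def by (rule Least_le) blast

lemma gamma_ge:
  assumes "total_dominating H S0" "finite S0"
    and "\<And>S. total_dominating H S \<Longrightarrow> finite S \<Longrightarrow> b \<le> card S"
  shows "b \<le> gamma_t H"
proof -
  have "\<exists>S. total_dominating H S \<and> finite S \<and> card S = gamma_t H"
    unfolding gamma_t_def by (rule LeastI_ex) (use assms in blast)
  then show ?thesis using assms(3) by force
qed

lemma gammaG: assumes "m \<ge> 1" shows "gamma_t (G m) = 2*m"
proof (rule antisym)
  let ?S = "{0,1::nat} \<times> {1..m}"
  have td: "total_dominating (G m) ?S"
    unfolding total_dominating_def
  proof (intro conjI ballI)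
    show "?S \<subseteq> verts (G m)" by auto
  next
    fix v assume "v \<in> verts (G m)"
    then obtain x i where v: "v = (x,i)" "x \<in> {0,1,2}" "i \<in> {1..m}" by auto
    show "\<exists>u\<in>?S. adj (G m) v u"
    proof (cases "x = 1")
      case True thus ?thesis using v by (intro bexI[of _ "(0,i)"]) auto
    next
      case False thus ?thesis using v by (intro bexI[of _ "(1,i)"]) auto
    qed
  qed
  have c: "card ?S = 2*m" by (simp add: card_cartesian_product)
  show "gamma_t (G m) \<le> 2*m" using gamma_le[OF td] c by simp
  show "2*m \<le> gamma_t (G m)"
  proof (rule gamma_ge[OF td])
    show "finite ?S" by simp
  next
    fix S assume tS: "total_dominating (G m) S" and fS: "finite S"
    have sub: "S \<subseteq> {0,1,2} \<times> {1..m}" using tS by (simp add: total_dominating_def)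
    have T1: "(\<lambda>i. (1::nat,i)) ` {1..m} \<subseteq> S"
    proof
      fix v assume "v \<in> (\<lambda>i. (1::nat,i)) ` {1..m}"
      then obtain i where v: "v = (1,i)" "i \<in> {1..m}" by auto
      have "(2,i) \<in> verts (G m)" using v by simp
      then obtain u where "u \<in> S" "adj (G m) (2,i) u" using tS unfolding total_dominating_def by blast
      then show "v \<in> S" using v by (cases u) auto
    qed
    let ?T2 = "S \<inter> ({0,2} \<times> {1..m})"
    have "{1..m} \<subseteq> snd ` ?T2"
    proof
      fix i assume i: "i \<in> {1..m}"
      have "(1,i) \<in> verts (G m)" using i by simp
      then obtain u where u: "u \<in> S" "adj (G m) (1,i) u" using tS unfolding total_dominating_def by blast
      obtain y j where "u = (y,j)" by (cases u)
      then have "u \<in> ?T2" "snd u = i" using u sub by auto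
      then show "i \<in> snd ` ?T2" by force
    qed
    then have "m \<le> card ?T2" using card_mono[OF _ \<open>{1..m} \<subseteq> snd ` ?T2\<close>] card_image_le[of ?T2 snd] fS by simp
    moreover have "card ((\<lambda>i. (1::nat,i)) ` {1..m}) = m" by (simp add: card_image inj_on_def)
    moreover have "card ((\<lambda>i. (1::nat,i)) ` {1..m} \<union> ?T2) = card ((\<lambda>i. (1::nat,i)) ` {1..m}) + card ?T2"
      by (rule card_Un_disjoint) (use fS in auto)
    moreover have "card ((\<lambda>i. (1::nat,i)) ` {1..m} \<union> ?T2) \<le> card S"
      by (rule card_mono) (use fS T1 in auto)
    ultimately show "2*m \<le> card S" by linarith
  qed
qed




definition blk :: "nat \<Rightarrow> nat \<Rightarrow> ((nat\<times>nat)\<times>(nat\<times>nat)) set" where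
  "blk i j = {p. snd (fst p) = i \<and> snd (snd p) = j \<and> fst (fst p) < 3 \<and> fst (snd p) < 3}"

lemma mem_blk[simp]: "((x,i'),(y,j')) \<in> blk i j \<longleftrightarrow> i' = i \<and> j' = j \<and> x < 3 \<and> y < 3"
  by (auto simp: blk_def)

lemma card2: "finite A \<Longrightarrow> a\<in>A \<Longrightarrow> b\<in>A \<Longrightarrow> a\<noteq>b \<Longrightarrow> 2 \<le> card A"
  by (metis card_2_iff card_mono empty_subsetI insert_subset)

lemma card3: "finite A \<Longrightarrow> a\<in>A \<Longrightarrow> b\<in>A \<Longrightarrow> c\<in>A \<Longrightarrow> a\<noteq>b \<Longrightarrow> a\<noteq>c \<Longrightarrow> b\<noteq>c \<Longrightarrow> 3 \<le> card A"
proof -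
  assume "finite A" "a\<in>A" "b\<in>A" "c\<in>A" "a\<noteq>b" "a\<noteq>c" "b\<noteq>c"
  then have "card {a,b,c} = 3" "{a,b,c} \<subseteq> A" by auto
  then show ?thesis using card_mono[OF \<open>finite A\<close>] by metis
qed

locale blkc =
  fixes S :: "((nat\<times>nat)\<times>(nat\<times>nat)) set" and i j :: nat
  assumes fin: "finite S"
    and h1: "((1,i),(2,j))\<in>S \<or> ((2,i),(1,j))\<in>S"
    and h2: "((0,i),(2,j))\<in>S \<or> ((2,i),(2,j))\<in>S \<or> ((1,i),(1,j))\<in>S"
    and h3: "((1,i),(1,j))\<in>S \<or> ((2,i),(0,j))\<in>S \<or> ((2,i),(2,j))\<in>S"
begin

lemma finB: "finite (S \<inter> blk i j)" using fin by simp

lemma C2: "a \<in> S \<Longrightarrow> b \<in> S \<Longrightarrow> a \<in> blk i j \<Longrightarrow> b \<in> blk i j \<Longrightarrow> a \<noteq> b \<Longrightarrow> 2 \<le> card (S \<inter> blk i j)"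
  using card2[OF finB, of a b] by blast
lemma C3: "a \<in> S \<Longrightarrow> b \<in> S \<Longrightarrow> c \<in> S \<Longrightarrow> a \<in> blk i j \<Longrightarrow> b \<in> blk i j \<Longrightarrow> c \<in> blk i j
   \<Longrightarrow> a \<noteq> b \<Longrightarrow> a \<noteq> c \<Longrightarrow> b \<noteq> c \<Longrightarrow> 3 \<le> card (S \<inter> blk i j)"
  using card3[OF finB, of a b c] by blast



lemma two: "2 \<le> card (S \<inter> blk i j)"
  using h1
proof
  assume a: "((1,i),(2,j))\<in>S"
  from h2 show ?thesis
    by (elim disjE) (rule C2[OF a], assumption, simp_all)+
next
  assume a: "((2,i),(1,j))\<in>S"
  from h3 show ?thesis
    by (elim disjE) (rule C2[OF a], assumption, simp_all)+
qed

lemma three_bc_cb: assumes a: "((1,i),(2,j))\<in>S" and b: "((2,i),(1,j))\<in>S" shows "3 \<le> card (S \<inter> blk i j)"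
  using h2 by (elim disjE) (rule C3[OF a b], assumption, simp_all)+

lemma three_a: assumes v: "((x,i),(y,j))\<in>S" "x = 0 \<or> y = 0" "x < 3" "y < 3"
  shows "3 \<le> card (S \<inter> blk i j)"
  using h1
proof
  assume a: "((1,i),(2,j))\<in>S"
  from h2 show ?thesis
  proof (elim disjE)
    assume b: "((0,i),(2,j))\<in>S"
    from h3 show ?thesis
      by (elim disjE) (rule C3[OF a b], assumption, simp_all)+
  next
    assume b: "((2,i),(2,j))\<in>S"
    show ?thesis by (rule C3[OF a b v(1)]) (use v in auto)
  next
    assume b: "((1,i),(1,j))\<in>S"
    show ?thesis by (rule C3[OF a b v(1)]) (use v in auto)
  qed
next
  assume a: "((2,i),(1,j))\<in>S"
  from h3 show ?thesis
  proof (elim disjE)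
    assume b: "((2,i),(0,j))\<in>S"
    from h2 show ?thesis
      by (elim disjE) (rule C3[OF a b], assumption, simp_all)+
  next
    assume b: "((1,i),(1,j))\<in>S"
    show ?thesis by (rule C3[OF a b v(1)]) (use v in auto)
  next
    assume b: "((2,i),(2,j))\<in>S"
    show ?thesis by (rule C3[OF a b v(1)]) (use v in auto)
  qed
qed
end



lemma nb:
  assumes "total_dominating (cart_prod (G k) (G n)) S" "x \<in> {0,1,2}" "i \<in> {1..k}" "y \<in> {0,1,2}" "j \<in> {1..n}"
  shows "\<exists>x' i' y' j'. ((x',i'),(y',j')) \<in> S \<and> adj (cart_prod (G k) (G n)) ((x,i),(y,j)) ((x',i'),(y',j'))"
proof -
  have "((x,i),(y,j)) \<in> verts (cart_prod (G k) (G n))" using assms by simp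
  then obtain u where "u \<in> S" "adj (cart_prod (G k) (G n)) ((x,i),(y,j)) u"
    using assms(1) unfolding total_dominating_def by blast
  moreover obtain x' i' y' j' where "u = ((x',i'),(y',j'))" by (metis prod.exhaust)
  ultimately show ?thesis by blast
qed

lemma inV:
  assumes "total_dominating (cart_prod (G k) (G n)) S" "((x,i),(y,j)) \<in> S"
  shows "x \<in> {0,1,2}" "i \<in> {1..k}" "y \<in> {0,1,2}" "j \<in> {1..n}"
  using assms unfolding total_dominating_def by auto

lemma blkc_of:
  assumes td: "total_dominating (cart_prod (G k) (G n)) S" and fin: "finite S"
    and i: "i \<in> {1..k}" and j: "j \<in> {1..n}"
  shows "blkc S i j"
proof
  show "finite S" by fact
  obtain x' i' y' j' where "((x',i'),(y',j')) \<in> S" "adj (cart_prod (G k) (G n)) ((2,i),(2,j)) ((x',i'),(y',j'))"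
    using nb[OF td _ i _ j, of 2 2] by auto
  then show "((1,i),(2,j))\<in>S \<or> ((2,i),(1,j))\<in>S" by auto
next
  obtain x' i' y' j' where "((x',i'),(y',j')) \<in> S" "adj (cart_prod (G k) (G n)) ((1,i),(2,j)) ((x',i'),(y',j'))"
    using nb[OF td _ i _ j, of 1 2] by auto
  then show "((0,i),(2,j))\<in>S \<or> ((2,i),(2,j))\<in>S \<or> ((1,i),(1,j))\<in>S" by auto
next
  obtain x' i' y' j' where "((x',i'),(y',j')) \<in> S" "adj (cart_prod (G k) (G n)) ((2,i),(1,j)) ((x',i'),(y',j'))"
    using nb[OF td _ i _ j, of 2 1] by auto
  then show "((1,i),(1,j))\<in>S \<or> ((2,i),(0,j))\<in>S \<or> ((2,i),(2,j))\<in>S" by auto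
qed

lemma lower:
  assumes td: "total_dominating (cart_prod (G k) (G n)) S" and fin: "finite S"
    and k: "2 \<le> k" "k \<le> n"
  shows "2*k*n + k \<le> card S"
proof -
  define I where "I = {1..k}"
  define J where "J = {1..n}"
  define NT where "NT = {p \<in> I \<times> J. 3 \<le> card (S \<inter> blk (fst p) (snd p))}"
  have bl: "\<And>i j. i \<in> I \<Longrightarrow> j \<in> J \<Longrightarrow> blkc S i j"
    using blkc_of[OF td fin] unfolding I_def J_def by blast
  have aNT: "(i,j) \<in> NT" if "((x,i),(y,j)) \<in> S" "x = 0 \<or> y = 0" for x y i j
  proof -
    have r: "x \<in> {0,1,2}" "i \<in> I" "y \<in> {0,1,2}" "j \<in> J"
      using inV[OF td that(1)] unfolding I_def J_def by auto
    have "3 \<le> card (S \<inter> blk i j)"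
      by (rule blkc.three_a[OF bl[OF r(2,4)] that]) (use r in auto)
    then show ?thesis using r unfolding NT_def by auto
  qed
  have cols: "\<forall>j\<in>J. \<exists>i. (i,j) \<in> NT" if i0: "i0 \<in> I" and none: "\<forall>j. (i0,j) \<notin> NT" for i0
  proof
    fix j assume j: "j \<in> J"
    obtain x' i' y' j' where u: "((x',i'),(y',j')) \<in> S" "adj (cart_prod (G k) (G n)) ((2,i0),(0,j)) ((x',i'),(y',j'))"
      using nb[OF td _ _ _ , of 2 i0 0 j] i0 j unfolding I_def J_def by auto
    have cb: "((2,i0),(1,j)) \<in> S"
    proof -
      from u(2) have "(x' = 2 \<and> i' = i0 \<and> y' = 0) \<or> (x' = 2 \<and> i' = i0 \<and> y' = 1 \<and> j' = j) \<or> (x' = 1 \<and> i' = i0 \<and> y' = 0 \<and> j' = j)"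
        by auto
      then show ?thesis using u(1) aNT none by blast
    qed
    obtain x'' i'' y'' j'' where w: "((x'',i''),(y'',j'')) \<in> S" "adj (cart_prod (G k) (G n)) ((0,i0),(2,j)) ((x'',i''),(y'',j''))"
      using nb[OF td _ _ _ , of 0 i0 2 j] i0 j unfolding I_def J_def by auto
    from w(2) have "(x'' = 0 \<and> i'' = i0 \<and> y'' = 1 \<and> j'' = j) \<or> (x'' = 0 \<and> y'' = 2 \<and> j'' = j) \<or> (x'' = 1 \<and> i'' = i0 \<and> y'' = 2 \<and> j'' = j)"
      by auto
    moreover have "((1,i0),(2,j)) \<notin> S"
    proof
      assume "((1,i0),(2,j)) \<in> S"
      then have "3 \<le> card (S \<inter> blk i0 j)" using blkc.three_bc_cb[OF bl[OF i0 j] _ cb] by blast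
      then show False using none i0 j unfolding NT_def by auto
    qed
    ultimately show "\<exists>i. (i,j) \<in> NT" using w(1) aNT none by blast
  qed
  have finNT: "finite NT" unfolding NT_def I_def J_def by auto
  have cNT: "k \<le> card NT"
  proof (cases "\<forall>i\<in>I. \<exists>j. (i,j) \<in> NT")
    case True
    then have "I \<subseteq> fst ` NT" by force
    then have "card I \<le> card (fst ` NT)" by (rule card_mono[rotated]) (use finNT in auto)
    then have "card I \<le> card NT" using card_image_le[OF finNT, of fst] by linarith
    then show ?thesis unfolding I_def by simp
  next
    case False
    then obtain i0 where "i0 \<in> I" "\<forall>j. (i0,j) \<notin> NT" by blast
    from cols[OF this] have "J \<subseteq> snd ` NT" by force
    then have "card J \<le> card (snd ` NT)" by (rule card_mono[rotated]) (use finNT in auto)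
    then have "card J \<le> card NT" using card_image_le[OF finNT, of snd] by linarith
    then show ?thesis unfolding J_def using k by simp
  qed
  let ?c = "\<lambda>p. card (S \<inter> blk (fst p) (snd p))"
  have finIJ: "finite (I \<times> J)" unfolding I_def J_def by simp
  have "card (\<Union>p\<in>I\<times>J. S \<inter> blk (fst p) (snd p)) = (\<Sum>p\<in>I\<times>J. ?c p)"
  proof (rule card_UN_disjoint[OF finIJ])
    show "\<forall>p\<in>I\<times>J. finite (S \<inter> blk (fst p) (snd p))" using fin by simp
    show "\<forall>p\<in>I\<times>J. \<forall>q\<in>I\<times>J. p \<noteq> q \<longrightarrow> (S \<inter> blk (fst p) (snd p)) \<inter> (S \<inter> blk (fst q) (snd q)) = {}"
      by (auto simp: blk_def prod_eq_iff)
  qed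
  moreover have "card (\<Union>p\<in>I\<times>J. S \<inter> blk (fst p) (snd p)) \<le> card S"
    by (rule card_mono[OF fin]) auto
  moreover have "(\<Sum>p\<in>I\<times>J. (2 + (if p \<in> NT then 1 else 0))) \<le> (\<Sum>p\<in>I\<times>J. ?c p)"
  proof (rule sum_mono)
    fix p assume p: "p \<in> I \<times> J"
    have "2 \<le> ?c p" using blkc.two[OF bl] p by (cases p) auto
    then show "2 + (if p \<in> NT then 1 else 0) \<le> ?c p" using p unfolding NT_def by auto
  qed
  moreover have "(\<Sum>p\<in>I\<times>J. (2 + (if p \<in> NT then 1 else 0))) = 2*k*n + card NT"
  proof -
    have "NT \<subseteq> I \<times> J" unfolding NT_def by auto
    then have "(\<Sum>p\<in>I\<times>J. (if p \<in> NT then 1 else 0::nat)) = card NT"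
      using finIJ by (simp add: sum.If_cases Int_absorb1)
    then show ?thesis by (subst sum.distrib) (simp add: I_def J_def card_cartesian_product)
  qed
  ultimately show ?thesis using cNT by linarith
qed




lemma cl2: "card {a,b} \<le> 2" using card_length[of "[a,b]"] by simp
lemma cl4: "card {a,b,c,d} \<le> 4" using card_length[of "[a,b,c,d]"] by simp

lemma upper:
  assumes k: "2 \<le> k" and n: "2 \<le> n"
  shows "\<exists>S. total_dominating (cart_prod (G k) (G n)) S \<and> finite S \<and> card S \<le> 2*k*n + 2*k"
proof -
  define S0 :: "((nat\<times>nat)\<times>(nat\<times>nat)) set" where
    "S0 = (\<Union>i\<in>{1..k}. \<Union>j\<in>{1..<n}. {((1,i),(2,j)),((1,i),(1,j))})
        \<union> (\<Union>i\<in>{1..k}. {((2,i),(1,n)),((2,i),(0,n)),((0,i),(2,n)),((0,i),(0,1))})"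
  have fin: "finite S0" unfolding S0_def by auto
  have td: "total_dominating (cart_prod (G k) (G n)) S0"
    unfolding total_dominating_def
  proof (intro conjI ballI)
    show "S0 \<subseteq> verts (cart_prod (G k) (G n))" using n unfolding S0_def by auto
  next
    fix v assume "v \<in> verts (cart_prod (G k) (G n))"
    then obtain x i y j where v: "v = ((x,i),(y,j))" and xy: "x \<in> {0,1,2}" "y \<in> {0,1,2}"
      and ij: "i \<in> {1..k}" "j \<in> {1..n}" by auto
    define i2 where "i2 = (if i = 1 then 2 else (1::nat))"
    have i2: "i2 \<in> {1..k}" "i2 \<noteq> i" using k ij unfolding i2_def by auto
    have f00: "j < n \<Longrightarrow> \<exists>u\<in>S0. adj (cart_prod (G k) (G n)) ((0,i),(0,j)) u"
    proof (cases "j = 1")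
      case True
      then show ?thesis using i2 ij n by (intro bexI[of _ "((0,i2),(0,1))"]) (auto simp: S0_def)
    next
      case False
      then show ?thesis using i2 ij n by (intro bexI[of _ "((0,i),(0,1))"]) (auto simp: S0_def)
    qed
    have f01: "j < n \<Longrightarrow> \<exists>u\<in>S0. adj (cart_prod (G k) (G n)) ((0,i),(1,j)) u"
      using i2 ij n by (intro bexI[of _ "((1,i),(1,j))"]) (auto simp: S0_def)
    have f02: "j < n \<Longrightarrow> \<exists>u\<in>S0. adj (cart_prod (G k) (G n)) ((0,i),(2,j)) u"
      using i2 ij n by (intro bexI[of _ "((1,i),(2,j))"]) (auto simp: S0_def)
    have f10: "j < n \<Longrightarrow> \<exists>u\<in>S0. adj (cart_prod (G k) (G n)) ((1,i),(0,j)) u"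
      using i2 ij n by (intro bexI[of _ "((1,i),(1,j))"]) (auto simp: S0_def)
    have f11: "j < n \<Longrightarrow> \<exists>u\<in>S0. adj (cart_prod (G k) (G n)) ((1,i),(1,j)) u"
      using i2 ij n by (intro bexI[of _ "((1,i),(2,j))"]) (auto simp: S0_def)
    have f12: "j < n \<Longrightarrow> \<exists>u\<in>S0. adj (cart_prod (G k) (G n)) ((1,i),(2,j)) u"
      using i2 ij n by (intro bexI[of _ "((1,i),(1,j))"]) (auto simp: S0_def)
    have f20: "j < n \<Longrightarrow> \<exists>u\<in>S0. adj (cart_prod (G k) (G n)) ((2,i),(0,j)) u"
      using i2 ij n by (intro bexI[of _ "((2,i),(0,n))"]) (auto simp: S0_def)
    have f21: "j < n \<Longrightarrow> \<exists>u\<in>S0. adj (cart_prod (G k) (G n)) ((2,i),(1,j)) u"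
      using i2 ij n by (intro bexI[of _ "((1,i),(1,j))"]) (auto simp: S0_def)
    have f22: "j < n \<Longrightarrow> \<exists>u\<in>S0. adj (cart_prod (G k) (G n)) ((2,i),(2,j)) u"
      using i2 ij n by (intro bexI[of _ "((1,i),(2,j))"]) (auto simp: S0_def)
    have g00: "\<exists>u\<in>S0. adj (cart_prod (G k) (G n)) ((0,i),(0,n)) u"
      using i2 ij n by (intro bexI[of _ "((0,i),(0,1))"]) (auto simp: S0_def)
    have g01: "\<exists>u\<in>S0. adj (cart_prod (G k) (G n)) ((0,i),(1,n)) u"
      using i2 ij n by (intro bexI[of _ "((0,i),(2,n))"]) (auto simp: S0_def)
    have g02: "\<exists>u\<in>S0. adj (cart_prod (G k) (G n)) ((0,i),(2,n)) u"
      using i2 ij n by (intro bexI[of _ "((0,i2),(2,n))"]) (auto simp: S0_def)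
    have g10: "\<exists>u\<in>S0. adj (cart_prod (G k) (G n)) ((1,i),(0,n)) u"
      using i2 ij n by (intro bexI[of _ "((2,i),(0,n))"]) (auto simp: S0_def)
    have g11: "\<exists>u\<in>S0. adj (cart_prod (G k) (G n)) ((1,i),(1,n)) u"
      using i2 ij n by (intro bexI[of _ "((2,i),(1,n))"]) (auto simp: S0_def)
    have g12: "\<exists>u\<in>S0. adj (cart_prod (G k) (G n)) ((1,i),(2,n)) u"
      using i2 ij n by (intro bexI[of _ "((0,i),(2,n))"]) (auto simp: S0_def)
    have g20: "\<exists>u\<in>S0. adj (cart_prod (G k) (G n)) ((2,i),(0,n)) u"
      using i2 ij n by (intro bexI[of _ "((2,i),(1,n))"]) (auto simp: S0_def)
    have g21: "\<exists>u\<in>S0. adj (cart_prod (G k) (G n)) ((2,i),(1,n)) u"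
      using i2 ij n by (intro bexI[of _ "((2,i),(0,n))"]) (auto simp: S0_def)
    have g22: "\<exists>u\<in>S0. adj (cart_prod (G k) (G n)) ((2,i),(2,n)) u"
      using i2 ij n by (intro bexI[of _ "((2,i),(1,n))"]) (auto simp: S0_def)
    have jx: "j < n \<or> j = n" using ij by auto
    have xs: "x = 0 \<or> x = 1 \<or> x = 2" and ys: "y = 0 \<or> y = 1 \<or> y = 2" using xy by auto
    show "\<exists>u\<in>S0. adj (cart_prod (G k) (G n)) v u" unfolding v
      using jx xs ys by (elim disjE) (simp_all only: f00 f01 f02 f10 f11 f12 f20 f21 f22 g00 g01 g02 g10 g11 g12 g20 g21 g22)
  qed
  have "card S0 \<le> (\<Sum>i\<in>{1..k}. \<Sum>j\<in>{1..<n}. 2) + (\<Sum>i\<in>{1..k}. 4::nat)"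
  proof -
    have "card S0 \<le> card (\<Union>i\<in>{1..k}. \<Union>j\<in>{1..<n}. {((1::nat,i),(2::nat,j)),((1,i),(1,j))})
        + card (\<Union>i\<in>{1..k}. {((2::nat,i),(1::nat,n)),((2,i),(0,n)),((0,i),(2,n)),((0,i),(0,1))})"
      unfolding S0_def by (rule card_Un_le)
    also have "\<dots> \<le> (\<Sum>i\<in>{1..k}. \<Sum>j\<in>{1..<n}. 2) + (\<Sum>i\<in>{1..k}. 4::nat)"
    proof (rule add_mono)
      show "card (\<Union>i\<in>{1..k}. \<Union>j\<in>{1..<n}. {((1::nat,i),(2::nat,j)),((1,i),(1,j))}) \<le> (\<Sum>i\<in>{1..k}. \<Sum>j\<in>{1..<n}. 2)"
        by (rule order_trans[OF card_UN_le], simp, rule sum_mono, rule order_trans[OF card_UN_le], simp,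
            rule sum_mono, rule cl2)
      show "card (\<Union>i\<in>{1..k}. {((2::nat,i),(1::nat,n)),((2,i),(0,n)),((0,i),(2,n)),((0,i),(0,1))}) \<le> (\<Sum>i\<in>{1..k}. 4)"
        by (rule order_trans[OF card_UN_le], simp, rule sum_mono, rule cl4)
    qed
    finally show ?thesis .
  qed
  also have "\<dots> = 2*k*n + 2*k" using n by (cases n) (simp_all add: algebra_simps)
  finally show ?thesis using td fin by blast
qed




lemma bounds:
  assumes k: "2 \<le> k" "k \<le> n"
  shows "1/2 + 1/(4 * real n) \<le> q_t (G k) (G n) \<and> q_t (G k) (G n) \<le> 1/2 + 1/(2 * real n)"
proof -
  let ?g = "gamma_t (cart_prod (G k) (G n))"
  obtain S where S: "total_dominating (cart_prod (G k) (G n)) S" "finite S" "card S \<le> 2*k*n + 2*k"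
    using upper[of k n] k by auto
  have up: "?g \<le> 2*k*n + 2*k" using gamma_le[OF S(1,2)] S(3) by linarith
  have lo: "2*k*n + k \<le> ?g" by (rule gamma_ge[OF S(1,2)]) (rule lower, use k in auto)
  have gk: "gamma_t (G k) = 2*k" "gamma_t (G n) = 2*n" using gammaG k by auto
  have q: "q_t (G k) (G n) = real ?g / (4 * real k * real n)"
    unfolding q_t_def gk by simp
  have kn: "real k > 0" "real n > 0" using k by auto
  have upr: "real ?g \<le> 2*real k*real n + 2*real k" using of_nat_mono[OF up] by simp
  have lor: "2*real k*real n + real k \<le> real ?g" using of_nat_mono[OF lo] by simp
  have e1: "1/2 + 1/(4 * real n) = (2*real k*real n + real k) / (4 * real k * real n)"
    using kn by (simp add: field_simps)
  have e2: "1/2 + 1/(2 * real n) = (2*real k*real n + 2*real k) / (4 * real k * real n)"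
    using kn by (simp add: field_simps)
  have pos: "4 * real k * real n > 0" using kn by simp
  have a1: "(2*real k*real n + real k) / (4 * real k * real n) \<le> real ?g / (4 * real k * real n)"
    by (rule divide_right_mono[OF lor]) (use pos in simp)
  have a2: "real ?g / (4 * real k * real n) \<le> (2*real k*real n + 2*real k) / (4 * real k * real n)"
    by (rule divide_right_mono[OF upr]) (use pos in simp)
  show ?thesis using a1 a2 unfolding q e1 e2 by simp
qed

theorem corollary6:
  shows "(\<forall>k n::nat. 2 \<le> k \<and> k \<le> n \<longrightarrow>
            1/2 + 1/(4 * real n) \<le> q_t (G k) (G n) \<and>
            q_t (G k) (G n) \<le> 1/2 + 1/(2 * real n))
       \<and> (\<forall>k::nat. 2 \<le> k \<longrightarrow> (\<lambda>n. q_t (G k) (G n)) \<longlonglongrightarrow> 1/2)"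
proof (rule conjI)
  show "\<forall>k n::nat. 2 \<le> k \<and> k \<le> n \<longrightarrow>
            1/2 + 1/(4 * real n) \<le> q_t (G k) (G n) \<and>
            q_t (G k) (G n) \<le> 1/2 + 1/(2 * real n)"
    using bounds by blast
next
  show "\<forall>k::nat. 2 \<le> k \<longrightarrow> (\<lambda>n. q_t (G k) (G n)) \<longlonglongrightarrow> 1/2"
  proof (intro allI impI)
  fix k :: nat assume k: "2 \<le> k"
  have l1: "(\<lambda>n. 1/2 + 1/(4 * real n)) \<longlonglongrightarrow> 1/2"
  proof -
    have "(\<lambda>n. 1/2 + (1/4) / real n) \<longlonglongrightarrow> 1/2 + 0"
      by (intro tendsto_add tendsto_const lim_const_over_n)
    then show ?thesis by simp
  qed
  have l2: "(\<lambda>n. 1/2 + 1/(2 * real n)) \<longlonglongrightarrow> 1/2"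
  proof -
    have "(\<lambda>n. 1/2 + (1/2) / real n) \<longlonglongrightarrow> 1/2 + 0"
      by (intro tendsto_add tendsto_const lim_const_over_n)
    then show ?thesis by simp
  qed
  have ev: "eventually (\<lambda>n. k \<le> n) sequentially" by (rule eventually_ge_at_top)
  show "(\<lambda>n. q_t (G k) (G n)) \<longlonglongrightarrow> 1/2"
  proof (rule tendsto_sandwich[OF _ _ l1 l2])
    show "\<forall>\<^sub>F n in sequentially. 1 / 2 + 1 / (4 * real n) \<le> q_t (G k) (G n)"
      using ev by (rule eventually_mono) (use bounds k in blast)
    show "\<forall>\<^sub>F n in sequentially. q_t (G k) (G n) \<le> 1 / 2 + 1 / (2 * real n)"
      using ev by (rule eventually_mono) (use bounds k in blast)
  qed
  qed
qed


end
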